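(* Let $G$ be a transitive permutation group on a finite set $\Omega$ of size $n$, and let $k$ be a positive integer with $k\le\lceil n/2\rceil-1$. Suppose that for every two disjoint subsets $A,B\subseteq\Omega$ of size $k$ there exists $g\in G$ with $A^g=B$. Then $G$ is $k$-homogeneous, i.e. $G$ is transitive on the set of all $k$-subsets of $\Omega$. *)

theory Defs
  imports Complex_Main "HOL-Algebra.Bij"
begin

text \<open>A permutation group on \<Omega> is a subgroup G of the symmetric group BijGroup \<Omega>.
  The image of a subset A under g is g ` A.\<close>

definition perm_transitive :: "'a set \<Rightarrow> ('a \<Rightarrow> 'a) set \<Rightarrow> bool" where
  "perm_transitive \<Omega> G \<longleftrightarrow> (\<forall>x\<in>\<Omega>. \<forall>y\<in>\<Omega>. \<exists>g\<in>G. g x = y)"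

definition k_homogeneous :: "'a set \<Rightarrow> ('a \<Rightarrow> 'a) set \<Rightarrow> nat \<Rightarrow> bool" where
  "k_homogeneous \<Omega> G k \<longleftrightarrow>
     (\<forall>A B. A \<subseteq> \<Omega> \<longrightarrow> B \<subseteq> \<Omega> \<longrightarrow> card A = k \<longrightarrow> card B = k \<longrightarrow> (\<exists>g\<in>G. g ` A = B))"

end

theory Submission
  imports Defs
begin

lemma comp_in_G:
  assumes "subgroup G (BijGroup \<Omega>)" "g \<in> G" "h \<in> G"
  shows "compose \<Omega> g h \<in> G"
proof -
  have sub: "G \<subseteq> Bij \<Omega>" using subgroup.subset[OF assms(1)] by (simp add: BijGroup_def)
  have "g \<otimes>\<^bsub>BijGroup \<Omega>\<^esub> h \<in> G" using subgroup.m_closed[OF assms] .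
  moreover have "g \<otimes>\<^bsub>BijGroup \<Omega>\<^esub> h = compose \<Omega> g h"
    using sub assms(2,3) by (auto simp: BijGroup_def)
  ultimately show ?thesis by simp
qed

lemma comp_image:
  assumes "A \<subseteq> \<Omega>" "h \<in> Bij \<Omega>"
  shows "compose \<Omega> g h ` A = g ` (h ` A)"
  using assms by (auto simp: compose_eq subset_iff image_iff)

lemma one_step:
  assumes fin: "finite \<Omega>" and n: "card \<Omega> = n"
    and sg: "subgroup G (BijGroup \<Omega>)"
    and kn: "2 * k + 1 \<le> n"
    and H: "\<forall>A B. A \<subseteq> \<Omega> \<longrightarrow> B \<subseteq> \<Omega> \<longrightarrow> card A = k \<longrightarrow> card B = k \<longrightarrow> A \<inter> B = {}
           \<longrightarrow> (\<exists>g\<in>G. g ` A = B)"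
    and A: "A \<subseteq> \<Omega>" "card A = k" and A': "A' \<subseteq> \<Omega>" "card A' = k"
    and U: "card (A \<union> A') \<le> k + 1"
  shows "\<exists>g\<in>G. g ` A = A'"
proof -
  have sub: "G \<subseteq> Bij \<Omega>" using subgroup.subset[OF sg] by (simp add: BijGroup_def)
  have "card (\<Omega> - (A \<union> A')) = n - card (A \<union> A')"
    using fin A A' n by (simp add: card_Diff_subset finite_subset)
  hence "k \<le> card (\<Omega> - (A \<union> A'))" using U kn by linarith
  then obtain C where C: "C \<subseteq> \<Omega> - (A \<union> A')" "card C = k"
    by (meson obtain_subset_with_card_n)
  obtain g where g: "g \<in> G" "g ` A = C" using H A C by blast
  obtain h where h: "h \<in> G" "h ` C = A'" using H A' C by blast
  have "compose \<Omega> h g \<in> G" using comp_in_G[OF sg h(1) g(1)] .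
  moreover have "compose \<Omega> h g ` A = A'"
    using comp_image[OF A(1), of g h] sub g h by auto
  ultimately show ?thesis by blast
qed

lemma main_ind:
  assumes fin: "finite \<Omega>" and n: "card \<Omega> = n"
    and sg: "subgroup G (BijGroup \<Omega>)"
    and kn: "2 * k + 1 \<le> n"
    and H: "\<forall>A B. A \<subseteq> \<Omega> \<longrightarrow> B \<subseteq> \<Omega> \<longrightarrow> card A = k \<longrightarrow> card B = k \<longrightarrow> A \<inter> B = {}
           \<longrightarrow> (\<exists>g\<in>G. g ` A = B)"
  shows "\<forall>A B. A \<subseteq> \<Omega> \<longrightarrow> B \<subseteq> \<Omega> \<longrightarrow> card A = k \<longrightarrow> card B = k \<longrightarrow> card (A - B) = m
           \<longrightarrow> (\<exists>g\<in>G. g ` A = B)"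
proof (induction m)
  case 0
  show ?case
  proof (intro allI impI)
    fix A B assume a: "A \<subseteq> \<Omega>" "B \<subseteq> \<Omega>" "card A = k" "card B = k" "card (A - B) = 0"
    have fA: "finite A" "finite B" using a fin finite_subset by auto
    have "A \<subseteq> B" using a(5) fA by auto
    hence "A = B" using fA a by (simp add: card_subset_eq)
    have "card (A \<union> B) \<le> k + 1" using \<open>A = B\<close> a by simp
    thus "\<exists>g\<in>G. g ` A = B" using one_step[OF fin n sg kn H a(1,3) a(2,4)] by blast
  qed
next
  case (Suc m)
  show ?case
  proof (intro allI impI)
    fix A B assume a: "A \<subseteq> \<Omega>" "B \<subseteq> \<Omega>" "card A = k" "card B = k" "card (A - B) = Suc m"
    have fA: "finite A" "finite B" using a fin finite_subset by auto
    obtain x where x: "x \<in> A" "x \<notin> B" using a(5) by (metis Diff_iff card_0_eq fA(1) finite_Diff nat.distinct(1) subsetI subset_empty)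
    have "card (B - A) = card (A - B)"
      using fA a(3,4) by (metis card_Diff_subset_Int finite_Int Int_commute Int_lower1)
    then obtain y where y: "y \<in> B" "y \<notin> A" using a(5) by (metis Diff_iff card_0_eq fA(2) finite_Diff nat.distinct(1) subsetI subset_empty)
    define A' where "A' = insert y (A - {x})"
    have A'1: "A' \<subseteq> \<Omega>" using a y unfolding A'_def by auto
    have "k \<ge> 1" using a(3) x fA by (metis One_nat_def Suc_leI card_gt_0_iff empty_iff)
    hence A'2: "card A' = k" using fA x y a(3) unfolding A'_def by (simp add: card_Diff_singleton)
    have "A' - B = (A - B) - {x}" using x y unfolding A'_def by auto
    hence "card (A' - B) = m" using a(5) x fA by (simp add: card_Diff_singleton)
    then obtain h where h: "h \<in> G" "h ` A' = B" using Suc.IH A'1 A'2 a by blast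
    have "A \<union> A' = insert y A" unfolding A'_def using x by auto
    hence "card (A \<union> A') \<le> k + 1" using fA a(3) by (simp add: card_insert_le_m1)
    then obtain g where g: "g \<in> G" "g ` A = A'" using one_step[OF fin n sg kn H a(1,3) A'1 A'2] by blast
    have sub: "G \<subseteq> Bij \<Omega>" using subgroup.subset[OF sg] by (simp add: BijGroup_def)
    have "compose \<Omega> h g \<in> G" using comp_in_G[OF sg h(1) g(1)] .
    moreover have "compose \<Omega> h g ` A = B"
      using comp_image[OF a(1), of g h] sub g h by auto
    ultimately show "\<exists>g\<in>G. g ` A = B" by blast
  qed
qed

theorem lemma7p5:
  fixes \<Omega> :: "'a set" and G :: "('a \<Rightarrow> 'a) set" and n k :: nat
  assumes "finite \<Omega>" and "card \<Omega> = n"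
    and "subgroup G (BijGroup \<Omega>)"
    and "perm_transitive \<Omega> G"
    and "k \<ge> 1" and "int k \<le> \<lceil>real n / 2\<rceil> - 1"
    and "\<forall>A B. A \<subseteq> \<Omega> \<longrightarrow> B \<subseteq> \<Omega> \<longrightarrow> card A = k \<longrightarrow> card B = k \<longrightarrow> A \<inter> B = {}
           \<longrightarrow> (\<exists>g\<in>G. g ` A = B)"
  shows "k_homogeneous \<Omega> G k"
proof -
  have "real k + 1 \<le> \<lceil>real n / 2\<rceil>" using assms(6) by linarith
  hence "real k + 1 < real n / 2 + 1" by linarith
  hence kn: "2 * k + 1 \<le> n" by linarith
  show ?thesis unfolding k_homogeneous_def
    using main_ind[OF assms(1,2,3) kn assms(7)] by blast
qed

end
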